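(* If $\mathcal N\in\mathrm{Ch}(A'B',AB)$ is no-signaling from $A'$ to $B$, then $S_\infty[A|B]_{\mathcal N}\ge-\log|A|$.
   Context: All systems are finite-dimensional; $|X|$ denotes dimension; $\log$ base 2; $\mathrm{St}(X)$ density operators; $\mathrm{Ch}(X',X)$ quantum channels. $\mathcal R^{\mathbb 1}_{A'\to A}(X):=\operatorname{tr}(X)\mathbb 1_A$. $D_\infty(\rho\|\sigma):=\log\inf\{\lambda:\rho\le\lambda\sigma\}$; for a channel $\mathcal M$ and CP map $\mathcal M'$, $D_\infty[\mathcal M\|\mathcal M']:=\sup_{\rho\in\mathrm{St}(RX')}D_\infty((\mathrm{id}\otimes\mathcal M)(\rho)\|(\mathrm{id}\otimes\mathcal M')(\rho))$. Conditional channel min-entropy: $S_\infty[A|B]_{\mathcal N}:=-\inf_{\mathcal Q\in\mathrm{Ch}(B',B)}D_\infty[\mathcal N\|\mathcal R^{\mathbb 1}_{A'\to A}\otimes\mathcal Q]$. $\mathcal N$ is no-signaling (semicausal) from $A'$ to $B$ if there is $\mathcal Q^{\mathcal N}\in\mathrm{Ch}(B',B)$ with $\operatorname{tr}_A\circ\mathcal N=\operatorname{tr}_{A'}\otimes\mathcal Q^{\mathcal N}$. *)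

theory Defs
  imports Complex_Main "Jordan_Normal_Form.Matrix" "HOL-Library.Extended_Real"
begin

text \<open>Finite-dimensional quantum systems are given by their dimension d (d \<ge> 1);
operators on a system of dimension d are complex d x d matrices (carrier_mat d d).
For a composite system XY with dims dX, dY the basis index is (x,y) \<mapsto> x * dY + y.\<close>

definition mtrace :: "complex mat \<Rightarrow> complex" where
  "mtrace M = (\<Sum>i<dim_row M. M $$ (i, i))"

definition psd :: "nat \<Rightarrow> complex mat \<Rightarrow> bool" where
  "psd n M \<longleftrightarrow> M \<in> carrier_mat n n \<and> (\<forall>v \<in> carrier_vec n. 0 \<le> (M *\<^sub>v v) \<bullet>c v)"

definition loewner_le :: "nat \<Rightarrow> complex mat \<Rightarrow> complex mat \<Rightarrow> bool" where
  "loewner_le n M N \<longleftrightarrow> M \<in> carrier_mat n n \<and> N \<in> carrier_mat n n \<and> psd n (N - M)"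

definition density :: "nat \<Rightarrow> complex mat \<Rightarrow> bool" where
  "density n \<rho> \<longleftrightarrow> psd n \<rho> \<and> mtrace \<rho> = 1"

definition tensor_mat :: "complex mat \<Rightarrow> complex mat \<Rightarrow> complex mat" where
  "tensor_mat A B = mat (dim_row A * dim_row B) (dim_col A * dim_col B)
     (\<lambda>(i, j). A $$ (i div dim_row B, j div dim_col B) * B $$ (i mod dim_row B, j mod dim_col B))"

definition unit_mat :: "nat \<Rightarrow> nat \<Rightarrow> nat \<Rightarrow> complex mat" where
  "unit_mat n i j = mat n n (\<lambda>(k, l). if k = i \<and> l = j then 1 else 0)"

definition block :: "nat \<Rightarrow> complex mat \<Rightarrow> nat \<Rightarrow> nat \<Rightarrow> complex mat" where
  "block d M a b = mat d d (\<lambda>(k, l). M $$ (a * d + k, b * d + l))"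

text \<open>(id_R \<otimes> M)(\<rho>) for |R| = r, M from dimension d to dimension d'.\<close>
definition id_tensor :: "nat \<Rightarrow> nat \<Rightarrow> nat \<Rightarrow> (complex mat \<Rightarrow> complex mat) \<Rightarrow> complex mat \<Rightarrow> complex mat" where
  "id_tensor r d d' \<M> \<rho> = mat (r * d') (r * d')
     (\<lambda>(i, j). \<M> (block d \<rho> (i div d') (j div d')) $$ (i mod d', j mod d'))"

definition lin_map :: "nat \<Rightarrow> nat \<Rightarrow> (complex mat \<Rightarrow> complex mat) \<Rightarrow> bool" where
  "lin_map d d' \<M> \<longleftrightarrow>
     (\<forall>X \<in> carrier_mat d d. \<M> X \<in> carrier_mat d' d') \<and>
     (\<forall>X \<in> carrier_mat d d. \<forall>Y \<in> carrier_mat d d. \<M> (X + Y) = \<M> X + \<M> Y) \<and>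
     (\<forall>c. \<forall>X \<in> carrier_mat d d. \<M> (c \<cdot>\<^sub>m X) = c \<cdot>\<^sub>m \<M> X)"

definition CP_map :: "nat \<Rightarrow> nat \<Rightarrow> (complex mat \<Rightarrow> complex mat) \<Rightarrow> bool" where
  "CP_map d d' \<M> \<longleftrightarrow> lin_map d d' \<M> \<and>
     (\<forall>r > 0. \<forall>\<rho>. psd (r * d) \<rho> \<longrightarrow> psd (r * d') (id_tensor r d d' \<M> \<rho>))"

definition channel :: "nat \<Rightarrow> nat \<Rightarrow> (complex mat \<Rightarrow> complex mat) \<Rightarrow> bool" where
  "channel d d' \<M> \<longleftrightarrow> CP_map d d' \<M> \<and> (\<forall>X \<in> carrier_mat d d. mtrace (\<M> X) = mtrace X)"

text \<open>Tensor product M1 \<otimes> M2 of linear maps (d1 \<rightarrow> d1', d2 \<rightarrow> d2'), defined by linear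
  extension from matrix units: (M1 \<otimes> M2)(X) = sum X_{(i,k),(j,l)} M1(E_ij) \<otimes> M2(E_kl).\<close>
definition tensor_map :: "nat \<Rightarrow> nat \<Rightarrow> nat \<Rightarrow> nat \<Rightarrow> (complex mat \<Rightarrow> complex mat)
    \<Rightarrow> (complex mat \<Rightarrow> complex mat) \<Rightarrow> complex mat \<Rightarrow> complex mat" where
  "tensor_map d1 d2 d1' d2' \<M>1 \<M>2 X = mat (d1' * d2') (d1' * d2') (\<lambda>(p, q).
     (\<Sum>i<d1. \<Sum>j<d1. \<Sum>k<d2. \<Sum>l<d2.
        X $$ (i * d2 + k, j * d2 + l) *
        tensor_mat (\<M>1 (unit_mat d1 i j)) (\<M>2 (unit_mat d2 k l)) $$ (p, q)))"

definition repl_id :: "nat \<Rightarrow> complex mat \<Rightarrow> complex mat" where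
  "repl_id dA X = mtrace X \<cdot>\<^sub>m 1\<^sub>m dA"

definition ptrace_first :: "nat \<Rightarrow> nat \<Rightarrow> complex mat \<Rightarrow> complex mat" where
  "ptrace_first dX dY M = mat dY dY (\<lambda>(k, l). \<Sum>x<dX. M $$ (x * dY + k, x * dY + l))"

definition ptrace_second :: "nat \<Rightarrow> nat \<Rightarrow> complex mat \<Rightarrow> complex mat" where
  "ptrace_second dX dY M = mat dX dX (\<lambda>(k, l). \<Sum>y<dY. M $$ (k * dY + y, l * dY + y))"

definition D_max :: "nat \<Rightarrow> complex mat \<Rightarrow> complex mat \<Rightarrow> ereal" where
  "D_max n \<rho> \<sigma> =
     (if {c. loewner_le n \<rho> (complex_of_real (c::real) \<cdot>\<^sub>m \<sigma>)} = {} then \<infinity>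
      else ereal (log 2 (Inf {c. loewner_le n \<rho> (complex_of_real (c::real) \<cdot>\<^sub>m \<sigma>)})))"

definition D_max_ch :: "nat \<Rightarrow> nat \<Rightarrow> (complex mat \<Rightarrow> complex mat) \<Rightarrow> (complex mat \<Rightarrow> complex mat) \<Rightarrow> ereal" where
  "D_max_ch d d' \<M> \<M>' =
     (SUP (r, \<rho>) \<in> {(r, \<rho>). r > 0 \<and> density (r * d) \<rho>}.
        D_max (r * d') (id_tensor r d d' \<M> \<rho>) (id_tensor r d d' \<M>' \<rho>))"

text \<open>Conditional channel min-entropy S_\<infinity>[A|B]_N for N \<in> Ch(A'B', AB),
  with dimensions dA' = dA1, dB' = dB1, dA, dB.\<close>
definition S_min_ch :: "nat \<Rightarrow> nat \<Rightarrow> nat \<Rightarrow> nat \<Rightarrow> (complex mat \<Rightarrow> complex mat) \<Rightarrow> ereal" where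
  "S_min_ch dA1 dB1 dA dB \<N> =
     - (INF \<Q> \<in> {\<Q>. channel dB1 dB \<Q>}.
          D_max_ch (dA1 * dB1) (dA * dB) \<N> (tensor_map dA1 dB1 dA dB (repl_id dA) \<Q>))"

definition no_signaling :: "nat \<Rightarrow> nat \<Rightarrow> nat \<Rightarrow> nat \<Rightarrow> (complex mat \<Rightarrow> complex mat) \<Rightarrow> bool" where
  "no_signaling dA1 dB1 dA dB \<N> \<longleftrightarrow>
     (\<exists>\<Q>. channel dB1 dB \<Q> \<and>
        (\<forall>X \<in> carrier_mat (dA1 * dB1) (dA1 * dB1).
           ptrace_first dA dB (\<N> X) = \<Q> (ptrace_first dA1 dB1 X)))"

end

theory Submission
  imports Defs
begin

definition qf :: "nat \<Rightarrow> 'p set \<Rightarrow> (nat \<Rightarrow> 'p \<Rightarrow> nat \<Rightarrow> 'p \<Rightarrow> complex) \<Rightarrow> (nat \<Rightarrow> 'p \<Rightarrow> complex) \<Rightarrow> (nat \<Rightarrow> 'p \<Rightarrow> complex) \<Rightarrow> complex" where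
 "qf n P K u w = (\<Sum>a<n. \<Sum>p\<in>P. \<Sum>a'<n. \<Sum>p'\<in>P. cnj (u a p) * K a p a' p' * w a' p')"

lemma qf_diff_left: "qf n P K (\<lambda>a p. u a p - v a p) w = qf n P K u w - qf n P K v w"
  by (simp add: qf_def sum_subtractf[symmetric] algebra_simps)

lemma qf_diff_right: "qf n P K u (\<lambda>a p. v a p - w a p) = qf n P K u v - qf n P K u w"
  by (simp add: qf_def sum_subtractf[symmetric] algebra_simps)

lemma sum_if_const: "(\<Sum>x\<in>A. if b then f x else 0) = (if b then (\<Sum>x\<in>A. f x) else 0)"
  by auto

lemma qf_delta:
  assumes "c < n" "c' < n"
  shows "qf n P K (\<lambda>a p. if a = c then u p else 0) (\<lambda>a p. if a = c' then w p else 0)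
     = (\<Sum>p\<in>P. \<Sum>p'\<in>P. cnj (u p) * K c p c' p' * w p')"
proof -
  have e: "\<And>a p a' p'. cnj (if a = c then u p else 0) * K a p a' p' * (if a' = c' then w p' else 0) = (if a = c then (if a' = c' then cnj (u p) * K c p c' p' * w p' else 0) else 0)"
    by auto
  show ?thesis unfolding qf_def
    apply (simp only: e sum_if_const)
    using assms by (simp add: sum.swap[of _ "{..<n}"])
qed

lemma qf_main:
  fixes K :: "nat \<Rightarrow> 'p \<Rightarrow> nat \<Rightarrow> 'p \<Rightarrow> complex"
  assumes pos: "\<And>g. 0 \<le> qf n P K g g"
  shows "qf n P K g g \<le> of_nat n * (\<Sum>a<n. \<Sum>p\<in>P. \<Sum>p'\<in>P. cnj (g a p) * (\<Sum>c<n. K c p c p') * g a p')"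
proof -
  define G where "G a a' = (\<Sum>p\<in>P. \<Sum>p'\<in>P. cnj (g a p) * K a p a' p' * g a' p')" for a a'
  define E where "E a c = (\<Sum>p\<in>P. \<Sum>p'\<in>P. cnj (g a p) * K c p c p' * g a p')" for a c
  define e where "e a = (\<lambda>a'' p. if a'' = a then g a p else 0)" for a
  have qfe: "qf n P K (e a) (e a') = G a a'" if "a < n" "a' < n" for a a'
    unfolding e_def G_def using qf_delta[OF that] by blast
  have qg: "qf n P K g g = (\<Sum>a<n. \<Sum>a'<n. G a a')"
    unfolding qf_def G_def
    by (intro sum.cong refl, subst sum.swap) simp
  have Enn: "0 \<le> E a c" if "c < n" for a c
  proof -
    have "E a c = qf n P K (\<lambda>a'' p. if a'' = c then g a p else 0) (\<lambda>a'' p. if a'' = c then g a p else 0)"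
      unfolding E_def using qf_delta[OF that that, where u="g a" and w="g a" and P=P and K=K] by simp
    then show ?thesis using pos by simp
  qed
  have EG: "E a a = G a a" for a unfolding E_def G_def by simp
  have pair: "0 \<le> G a a + G a' a' - G a a' - G a' a" if "a < n" "a' < n" for a a'
  proof -
    have "0 \<le> qf n P K (\<lambda>x p. e a x p - e a' x p) (\<lambda>x p. e a x p - e a' x p)" by (rule pos)
    also have "\<dots> = G a a + G a' a' - G a a' - G a' a"
      by (simp add: qf_diff_left qf_diff_right qfe that)
    finally show ?thesis .
  qed
  have "0 \<le> (\<Sum>a<n. \<Sum>a'<n. G a a + G a' a' - G a a' - G a' a)"
    by (intro sum_nonneg pair) auto
  also have "\<dots> = (\<Sum>a<n. \<Sum>a'<n. G a a) + (\<Sum>a<n. \<Sum>a'<n. G a' a') - (\<Sum>a<n. \<Sum>a'<n. G a a') - (\<Sum>a<n. \<Sum>a'<n. G a' a)"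
    by (simp only: sum_subtractf sum.distrib)
  also have "(\<Sum>a<n. \<Sum>a'<n. G a' a) = (\<Sum>a<n. \<Sum>a'<n. G a a')"
    by (rule sum.swap)
  also have "(\<Sum>a<n. \<Sum>a'<n. G a' a') = (\<Sum>a<n. \<Sum>a'<n. G a a)"
    by (rule sum.swap)
  also have "(\<Sum>a<n. \<Sum>a'<n. G a a) = of_nat n * (\<Sum>a<n. G a a)"
    by (simp add: sum_distrib_left mult.commute)
  finally have "0 \<le> 2 * (of_nat n * (\<Sum>a<n. G a a) - (\<Sum>a<n. \<Sum>a'<n. G a a'))"
    by (simp add: algebra_simps)
  then have "0 \<le> of_nat n * (\<Sum>a<n. G a a) - (\<Sum>a<n. \<Sum>a'<n. G a a')"
    by (simp add: less_eq_complex_def)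
  then have s1: "qf n P K g g \<le> of_nat n * (\<Sum>a<n. G a a)" using qg by simp
  have "(\<Sum>a<n. G a a) \<le> (\<Sum>a<n. \<Sum>c<n. E a c)"
  proof (intro sum_mono)
    fix a assume a: "a \<in> {..<n}"
    have "(\<Sum>c<n. E a c) = E a a + (\<Sum>c\<in>{..<n} - {a}. E a c)"
      using a by (simp add: sum.remove)
    moreover have "0 \<le> (\<Sum>c\<in>{..<n} - {a}. E a c)" by (intro sum_nonneg Enn) auto
    ultimately show "G a a \<le> (\<Sum>c<n. E a c)" using EG by simp
  qed
  then have "of_nat n * (\<Sum>a<n. G a a) \<le> of_nat n * (\<Sum>a<n. \<Sum>c<n. E a c)"
    by (intro mult_left_mono) (auto simp: less_eq_complex_def)
  also have "(\<Sum>a<n. \<Sum>c<n. E a c) = (\<Sum>a<n. \<Sum>p\<in>P. \<Sum>p'\<in>P. cnj (g a p) * (\<Sum>c<n. K c p c p') * g a p')"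
  proof (intro sum.cong refl)
    fix a
    have "(\<Sum>p\<in>P. \<Sum>p'\<in>P. cnj (g a p) * (\<Sum>c<n. K c p c p') * g a p') = (\<Sum>p\<in>P. \<Sum>p'\<in>P. \<Sum>c<n. cnj (g a p) * K c p c p' * g a p')"
      by (simp add: sum_distrib_left sum_distrib_right)
    also have "\<dots> = (\<Sum>p\<in>P. \<Sum>c<n. \<Sum>p'\<in>P. cnj (g a p) * K c p c p' * g a p')"
      by (intro sum.cong refl) (rule sum.swap)
    also have "\<dots> = (\<Sum>c<n. \<Sum>p\<in>P. \<Sum>p'\<in>P. cnj (g a p) * K c p c p' * g a p')"
      by (rule sum.swap)
    finally show "(\<Sum>c<n. E a c) = (\<Sum>p\<in>P. \<Sum>p'\<in>P. cnj (g a p) * (\<Sum>c<n. K c p c p') * g a p')"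
      unfolding E_def by simp
  qed
  finally show ?thesis using s1 by simp
qed
lemma hform_eq:
  fixes M :: "complex mat"
  assumes "M \<in> carrier_mat n n" "v \<in> carrier_vec n"
  shows "(M *\<^sub>v v) \<bullet>c v = (\<Sum>i<n. \<Sum>j<n. cnj (v$i) * M$$(i,j) * v$j)"
proof -
  have "(M *\<^sub>v v) \<bullet>c v = (\<Sum>i<n. (\<Sum>j<n. M$$(i,j) * v$j) * cnj (v$i))"
    using assms by (simp add: scalar_prod_def atLeast0LessThan row_def)
  also have "\<dots> = (\<Sum>i<n. \<Sum>j<n. cnj (v$i) * M$$(i,j) * v$j)"
    by (simp add: sum_distrib_right sum_distrib_left mult_ac)
  finally show ?thesis .
qed

lemma psd_sum:
  assumes "psd n M"
  shows "0 \<le> (\<Sum>i<n. \<Sum>j<n. cnj (f i) * M$$(i,j) * f j)"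
proof -
  have M: "M \<in> carrier_mat n n" using assms unfolding psd_def by blast
  have "0 \<le> (M *\<^sub>v vec n f) \<bullet>c vec n f" using assms unfolding psd_def by auto
  also have "\<dots> = (\<Sum>i<n. \<Sum>j<n. cnj (f i) * M$$(i,j) * f j)"
    using hform_eq[OF M, of "vec n f"] by simp
  finally show ?thesis .
qed

lemma psd_intro:
  assumes "M \<in> carrier_mat n n" "\<And>f. 0 \<le> (\<Sum>i<n. \<Sum>j<n. cnj (f i) * M$$(i,j) * f j)"
  shows "psd n M"
  unfolding psd_def using assms hform_eq by auto

lemma psd_diag:
  assumes "psd n M" "i < n"
  shows "0 \<le> M $$ (i,i)"
proof -
  have e: "\<And>k j. cnj (if k = i then 1 else 0) * M$$(k,j) * (if j = i then 1 else 0) = (if k = i then (if j = i then M$$(i,i) else 0) else 0)" by auto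
  have "0 \<le> (\<Sum>k<n. \<Sum>j<n. cnj (if k = i then 1 else 0) * M$$(k,j) * (if j = i then 1 else 0))"
    by (rule psd_sum[OF assms(1)])
  also have "\<dots> = M $$ (i,i)" using assms(2)
    apply (simp only: e sum_if_const) by simp
  finally show ?thesis .
qed

lemma psd_trace:
  assumes "psd n M"
  shows "0 \<le> mtrace M"
proof -
  have "dim_row M = n" using assms unfolding psd_def by auto
  then show ?thesis unfolding mtrace_def using psd_diag[OF assms] by (auto intro: sum_nonneg)
qed

lemma sum_add_range: "(\<Sum>i<a+(n::nat). f i) = (\<Sum>i<a. f i) + (\<Sum>k<n. f (a+k))"
  by (induct n) (auto simp: add.assoc)

lemma sum_split_mult: "(\<Sum>i<(m::nat)*n. f i) = (\<Sum>x<m. \<Sum>k<n. f (x*n+k))"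
proof (induct m)
  case 0 then show ?case by simp
next
  case (Suc m)
  have "(\<Sum>i<Suc m*n. f i) = (\<Sum>i<m*n + n. f i)" by (simp add: add.commute)
  also have "\<dots> = (\<Sum>i<m*n. f i) + (\<Sum>k<n. f (m*n+k))" by (rule sum_add_range)
  finally show ?case using Suc by simp
qed

lemma sum_idx:
  fixes r dA dB :: nat
  shows "(\<Sum>i<r*(dA*dB). f i) = (\<Sum>a<dA. \<Sum>xb\<in>{..<r}\<times>{..<dB}. f (fst xb*(dA*dB)+a*dB+snd xb))"
proof -
  have "(\<Sum>i<r*(dA*dB). f i) = (\<Sum>x<r. \<Sum>a<dA. \<Sum>b<dB. f (x*(dA*dB)+(a*dB+b)))"
    by (simp only: sum_split_mult)
  also have "\<dots> = (\<Sum>a<dA. \<Sum>x<r. \<Sum>b<dB. f (x*(dA*dB)+(a*dB+b)))"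
    by (rule sum.swap)
  also have "\<dots> = (\<Sum>a<dA. \<Sum>x<r. \<Sum>b<dB. f (x*(dA*dB)+a*dB+b))"
    by (simp add: add.assoc)
  also have "\<dots> = (\<Sum>a<dA. \<Sum>xb\<in>{..<r}\<times>{..<dB}. f (fst xb*(dA*dB)+a*dB+snd xb))"
    by (simp add: sum.cartesian_product case_prod_beta)
  finally show ?thesis .
qed

lemma ab_lt: "a < dA \<Longrightarrow> b < dB \<Longrightarrow> a*dB+b < dA*(dB::nat)"
proof -
  assume a: "a < dA" and b: "b < dB"
  have "a*dB+b < (a+1)*dB" using b by simp
  also have "\<dots> \<le> dA*dB" using a by (intro mult_right_mono) auto
  finally show ?thesis .
qed

lemma idx_div: fixes dA dB x r :: nat shows "a < dA \<Longrightarrow> b < dB \<Longrightarrow> (x*(dA*dB)+a*dB+b) div (dA*dB) = x"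
proof -
  assume "a < dA" "b < dB"
  then have "a*dB+b < dA*dB"
    by (simp add: ab_lt)
  moreover then have "dA*dB \<noteq> 0" by linarith
  ultimately show ?thesis by (simp add: add.assoc)
qed

lemma idx_mod: fixes dA dB x r :: nat shows "a < dA \<Longrightarrow> b < dB \<Longrightarrow> (x*(dA*dB)+a*dB+b) mod (dA*dB) = a*dB+b"
proof -
  assume "a < dA" "b < dB"
  then have "a*dB+b < dA*dB"
    by (simp add: ab_lt)
  moreover then have "dA*dB \<noteq> 0" by linarith
  ultimately show ?thesis by (simp add: add.assoc)
qed

lemma idx_lt: fixes dA dB x r :: nat shows "a < dA \<Longrightarrow> b < dB \<Longrightarrow> x < r \<Longrightarrow> x*(dA*dB)+a*dB+b < r*(dA*dB)"
proof -
  assume "a < dA" "b < dB" "x < r"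
  then have "a*dB+b < dA*dB"
    by (simp add: ab_lt)
  then have "x*(dA*dB)+(a*dB+b) < x*(dA*dB) + dA*dB" by simp
  also have "\<dots> \<le> r*(dA*dB)" using \<open>x < r\<close>
    by (metis add.commute mult_Suc less_eq_Suc_le mult_le_cancel2)
  finally show ?thesis by (simp add: add.assoc)
qed

lemma ab_div: "b < dB \<Longrightarrow> (a*dB+b) div dB = (a::nat)"
  by simp
lemma ab_mod: "b < dB \<Longrightarrow> (a*dB+b) mod dB = (b::nat)"
  by simp
lemma lin_expand:
  assumes lin: "lin_map d d' Q" and Y: "Y \<in> carrier_mat d d" and pq: "p < d'" "q < d'"
  shows "Q Y $$ (p,q) = (\<Sum>k<d. \<Sum>l<d. Y$$(k,l) * Q (unit_mat d k l) $$ (p,q))"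
proof -
  have car: "\<And>X. X \<in> carrier_mat d d \<Longrightarrow> Q X \<in> carrier_mat d' d'"
    and add: "\<And>X Z. X \<in> carrier_mat d d \<Longrightarrow> Z \<in> carrier_mat d d \<Longrightarrow> Q (X + Z) = Q X + Q Z"
    and sm: "\<And>c X. X \<in> carrier_mat d d \<Longrightarrow> Q (c \<cdot>\<^sub>m X) = c \<cdot>\<^sub>m Q X"
    using lin unfolding lin_map_def by auto
  define Ys where "Ys S = mat d d (\<lambda>(k,l). if (k,l) \<in> S then Y$$(k,l) else 0)" for S
  have Ysc: "Ys S \<in> carrier_mat d d" for S unfolding Ys_def by simp
  have Ec: "unit_mat d k l \<in> carrier_mat d d" for k l unfolding unit_mat_def by simp
  have ind: "Q (Ys S) $$ (p,q) = (\<Sum>(k,l)\<in>S. Y$$(k,l) * Q (unit_mat d k l) $$ (p,q))"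
    if "finite S" "S \<subseteq> {..<d}\<times>{..<d}" for S
    using that
  proof (induct S rule: finite_induct)
    case empty
    have "Ys {} = 0 \<cdot>\<^sub>m Ys {}" unfolding Ys_def by (rule eq_matI) auto
    then have "Q (Ys {}) = 0 \<cdot>\<^sub>m Q (Ys {})" using sm[OF Ysc] by metis
    then have "Q (Ys {}) $$ (p,q) = 0"
      using car[OF Ysc, of "{}"] pq by (metis carrier_matD index_smult_mat(1) mult_zero_left)
    then show ?case by simp
  next
    case (insert s S)
    obtain k l where s: "s = (k,l)" by (cases s)
    have kl: "k < d" "l < d" using insert s by auto
    have "Ys (insert s S) = Ys S + Y$$(k,l) \<cdot>\<^sub>m unit_mat d k l"
      unfolding Ys_def unit_mat_def s using insert s by (intro eq_matI) auto
    then have "Q (Ys (insert s S)) = Q (Ys S) + Y$$(k,l) \<cdot>\<^sub>m Q (unit_mat d k l)"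
      using add[OF Ysc, of "Y$$(k,l) \<cdot>\<^sub>m unit_mat d k l" S] sm[OF Ec] Ec by simp
    then have "Q (Ys (insert s S)) $$ (p,q) = Q (Ys S) $$ (p,q) + Y$$(k,l) * Q (unit_mat d k l) $$ (p,q)"
      using car[OF Ysc, of S] car[OF Ec, of k l] pq by simp
    then show ?case using insert s by simp
  qed
  have "Ys ({..<d}\<times>{..<d}) = Y" unfolding Ys_def using Y by (intro eq_matI) auto
  then have "Q Y $$ (p,q) = (\<Sum>(k,l)\<in>{..<d}\<times>{..<d}. Y$$(k,l) * Q (unit_mat d k l) $$ (p,q))"
    using ind[of "{..<d}\<times>{..<d}"] by simp
  also have "\<dots> = (\<Sum>k<d. \<Sum>l<d. Y$$(k,l) * Q (unit_mat d k l) $$ (p,q))"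
    by (simp add: sum.cartesian_product)
  finally show ?thesis .
qed

lemma trace_unit: "i < n \<Longrightarrow> j < n \<Longrightarrow> mtrace (unit_mat n i j) = (if i = j then 1 else 0)"
  unfolding mtrace_def unit_mat_def by (cases "i = j") (auto intro!: sum.neutral)

lemma tensor_entry:
  assumes Q: "lin_map dB1 dB Q" and X: "X \<in> carrier_mat (dA1*dB1) (dA1*dB1)"
    and p: "p < dA*dB" and q: "q < dA*dB"
  shows "tensor_map dA1 dB1 dA dB (repl_id dA) Q X $$ (p,q)
     = (if p div dB = q div dB then Q (ptrace_first dA1 dB1 X) $$ (p mod dB, q mod dB) else 0)"
proof -
  have car: "\<And>Z. Z \<in> carrier_mat dB1 dB1 \<Longrightarrow> Q Z \<in> carrier_mat dB dB"
    using Q unfolding lin_map_def by auto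
  have Ec: "unit_mat dB1 k l \<in> carrier_mat dB1 dB1" for k l unfolding unit_mat_def by simp
  have dB: "dB > 0" using p by (cases "dB = 0") auto
  have pd: "p div dB < dA" "q div dB < dA" using p q by (auto simp: less_mult_imp_div_less)
  have pm: "p mod dB < dB" "q mod dB < dB" using dB by auto
  have tm: "tensor_mat (repl_id dA (unit_mat dA1 i j)) (Q (unit_mat dB1 k l)) $$ (p,q)
     = (if j = i then (if p div dB = q div dB then Q (unit_mat dB1 k l) $$ (p mod dB, q mod dB) else 0) else 0)"
    if "i < dA1" "j < dA1" for i j k l
  proof -
    have QE: "dim_row (Q (unit_mat dB1 k l)) = dB" "dim_col (Q (unit_mat dB1 k l)) = dB"
      using car[OF Ec] by auto
    show ?thesis
      unfolding tensor_mat_def repl_id_def using p q QE pd pm that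
      by (auto simp: trace_unit)
  qed
  have "tensor_map dA1 dB1 dA dB (repl_id dA) Q X $$ (p,q)
     = (\<Sum>i<dA1. \<Sum>j<dA1. \<Sum>k<dB1. \<Sum>l<dB1. X $$ (i*dB1+k, j*dB1+l) *
          tensor_mat (repl_id dA (unit_mat dA1 i j)) (Q (unit_mat dB1 k l)) $$ (p,q))"
    unfolding tensor_map_def using p q by simp
  also have "\<dots> = (\<Sum>i<dA1. \<Sum>j<dA1. \<Sum>k<dB1. \<Sum>l<dB1. if j = i then (if p div dB = q div dB then
          X $$ (i*dB1+k, i*dB1+l) * Q (unit_mat dB1 k l) $$ (p mod dB, q mod dB) else 0) else 0)"
    apply (rule sum.cong[OF refl])+
    by (simp add: tm)
  also have "\<dots> = (if p div dB = q div dB then (\<Sum>i<dA1. \<Sum>k<dB1. \<Sum>l<dB1.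
          X $$ (i*dB1+k, i*dB1+l) * Q (unit_mat dB1 k l) $$ (p mod dB, q mod dB)) else 0)"
    by (simp only: sum_if_const) simp
  also have "(\<Sum>i<dA1. \<Sum>k<dB1. \<Sum>l<dB1.
          X $$ (i*dB1+k, i*dB1+l) * Q (unit_mat dB1 k l) $$ (p mod dB, q mod dB))
      = (\<Sum>k<dB1. \<Sum>l<dB1. \<Sum>i<dA1.
          X $$ (i*dB1+k, i*dB1+l) * Q (unit_mat dB1 k l) $$ (p mod dB, q mod dB))"
    by (subst sum.swap, rule sum.cong[OF refl], rule sum.swap)
  also have "\<dots> = (\<Sum>k<dB1. \<Sum>l<dB1. ptrace_first dA1 dB1 X $$ (k,l) * Q (unit_mat dB1 k l) $$ (p mod dB, q mod dB))"
    unfolding ptrace_first_def by (simp add: sum_distrib_right)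
  also have "\<dots> = Q (ptrace_first dA1 dB1 X) $$ (p mod dB, q mod dB)"
    by (rule lin_expand[OF Q _ pm, symmetric]) (simp add: ptrace_first_def)
  finally show ?thesis .
qed

lemma trace_id_tensor:
  assumes N: "lin_map d d' N" and tp: "\<And>X. X \<in> carrier_mat d d \<Longrightarrow> mtrace (N X) = mtrace X"
    and rho: "\<rho> \<in> carrier_mat (r*d) (r*d)"
  shows "mtrace (id_tensor r d d' N \<rho>) = mtrace \<rho>"
proof -
  have car: "\<And>X. X \<in> carrier_mat d d \<Longrightarrow> N X \<in> carrier_mat d' d'"
    using N unfolding lin_map_def by auto
  have Bc: "block d \<rho> a b \<in> carrier_mat d d" for a b unfolding block_def by simp
  have "mtrace (id_tensor r d d' N \<rho>) = (\<Sum>i<r*d'. N (block d \<rho> (i div d') (i div d')) $$ (i mod d', i mod d'))"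
    unfolding mtrace_def id_tensor_def by simp
  also have "\<dots> = (\<Sum>x<r. \<Sum>k<d'. N (block d \<rho> x x) $$ (k, k))"
    by (simp only: sum_split_mult) (intro sum.cong refl, simp)
  also have "\<dots> = (\<Sum>x<r. mtrace (block d \<rho> x x))"
    using car[OF Bc] tp[OF Bc] unfolding mtrace_def by (metis carrier_matD(1))
  also have "\<dots> = (\<Sum>x<r. \<Sum>k<d. \<rho> $$ (x*d+k, x*d+k))"
    unfolding mtrace_def block_def by simp
  also have "\<dots> = mtrace \<rho>"
    unfolding mtrace_def using rho by (simp add: sum_split_mult)
  finally show ?thesis .
qed
lemma idx_modB: fixes dA dB x a b :: nat shows "b < dB \<Longrightarrow> (x*(dA*dB)+a*dB+b) mod dB = b"
proof -
  assume "b < dB"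
  have "x*(dA*dB)+a*dB+b = (x*dA+a)*dB + b" by (simp add: algebra_simps)
  then show ?thesis using \<open>b < dB\<close> by simp
qed

lemma key:
  fixes dA dB r :: nat and M T :: "complex mat"
  assumes psdM: "psd (r*(dA*dB)) M" and Tc: "T \<in> carrier_mat (r*(dA*dB)) (r*(dA*dB))"
    and Tent: "\<And>a a' x x' b b'. a<dA \<Longrightarrow> a'<dA \<Longrightarrow> x<r \<Longrightarrow> x'<r \<Longrightarrow> b<dB \<Longrightarrow> b'<dB \<Longrightarrow>
      T $$ (x*(dA*dB)+a*dB+b, x'*(dA*dB)+a'*dB+b') =
      (if a' = a then (\<Sum>c<dA. M $$ (x*(dA*dB)+c*dB+b, x'*(dA*dB)+c*dB+b')) else 0)"
  shows "loewner_le (r*(dA*dB)) M (of_nat dA \<cdot>\<^sub>m T)"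
proof -
  define n where "n = r*(dA*dB)"
  define P where "P = {..<r}\<times>{..<dB}"
  define idx where "idx a xb = fst xb*(dA*dB)+a*dB+snd xb" for a xb
  define K where "K a xb a' xb' = M $$ (idx a xb, idx a' xb')" for a xb a' xb'
  have Mc: "M \<in> carrier_mat n n" using psdM unfolding psd_def n_def by blast
  have form: "(\<Sum>i<n. \<Sum>j<n. cnj (f i) * A$$(i,j) * f j) = (\<Sum>a<dA. \<Sum>xb\<in>P. \<Sum>a'<dA. \<Sum>xb'\<in>P.
      cnj (f (idx a xb)) * A$$(idx a xb, idx a' xb') * f (idx a' xb'))" for f :: "nat \<Rightarrow> complex" and A :: "complex mat"
    unfolding n_def P_def idx_def by (simp only: sum_idx)
  have pos: "0 \<le> qf dA P K g g" for g
  proof -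
    define f where "f i = g ((i mod (dA*dB)) div dB) (i div (dA*dB), i mod dB)" for i
    have fidx: "f (idx a xb) = g a xb" if aA: "a < dA" and xbP: "xb \<in> P" for a xb
    proof -
      obtain x b where xb: "xb = (x,b)" "x < r" "b < dB" using xbP unfolding P_def by (cases xb) auto
      show ?thesis unfolding f_def idx_def xb using idx_div[OF aA xb(3)] idx_mod[OF aA xb(3)] idx_modB[OF xb(3)] xb
        by simp
    qed
    have "0 \<le> (\<Sum>i<n. \<Sum>j<n. cnj (f i) * M$$(i,j) * f j)" using psd_sum[OF psdM] unfolding n_def by blast
    also have "\<dots> = qf dA P K g g" unfolding form qf_def K_def
      apply (rule sum.cong[OF refl])+
      by (simp add: fidx)
    finally show ?thesis .
  qed
  show ?thesis unfolding loewner_le_def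
  proof (intro conjI)
    show "M \<in> carrier_mat (r * (dA * dB)) (r * (dA * dB))" using Mc n_def by simp
    show "of_nat dA \<cdot>\<^sub>m T \<in> carrier_mat (r * (dA * dB)) (r * (dA * dB))" using Tc by simp
    show "psd (r * (dA * dB)) (of_nat dA \<cdot>\<^sub>m T - M)"
    proof (rule psd_intro)
      show "of_nat dA \<cdot>\<^sub>m T - M \<in> carrier_mat (r * (dA * dB)) (r * (dA * dB))" using Mc n_def by (simp add: minus_carrier_mat)
      fix f :: "nat \<Rightarrow> complex"
      define g where "g a xb = f (idx a xb)" for a xb
      define ST where "ST = (\<Sum>i<n. \<Sum>j<n. cnj (f i) * T$$(i,j) * f j)"
      define SM where "SM = (\<Sum>i<n. \<Sum>j<n. cnj (f i) * M$$(i,j) * f j)"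
      have SMq: "SM = qf dA P K g g" unfolding SM_def form qf_def K_def g_def ..
      have "ST = (\<Sum>a<dA. \<Sum>xb\<in>P. \<Sum>a'<dA. \<Sum>xb'\<in>P.
          if a' = a then cnj (g a xb) * (\<Sum>c<dA. K c xb c xb') * g a xb' else 0)"
        unfolding ST_def form g_def K_def
        apply (rule sum.cong[OF refl])+
        using Tent unfolding P_def idx_def by auto
      also have "\<dots> = (\<Sum>a<dA. \<Sum>xb\<in>P. \<Sum>xb'\<in>P. cnj (g a xb) * (\<Sum>c<dA. K c xb c xb') * g a xb')"
        by (simp only: sum_if_const) simp
      finally have STq: "ST = \<dots>" .
      have "SM \<le> of_nat dA * ST" unfolding SMq STq by (rule qf_main[OF pos])
      then have "0 \<le> of_nat dA * ST - SM" by simp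
      also have "of_nat dA * ST - SM = (\<Sum>i<n. \<Sum>j<n. cnj (f i) * (of_nat dA \<cdot>\<^sub>m T - M)$$(i,j) * f j)"
      proof -
        have "(\<Sum>i<n. \<Sum>j<n. cnj (f i) * (of_nat dA \<cdot>\<^sub>m T - M)$$(i,j) * f j)
            = (\<Sum>i<n. \<Sum>j<n. of_nat dA * (cnj (f i) * T$$(i,j) * f j) - cnj (f i) * M$$(i,j) * f j)"
          apply (rule sum.cong[OF refl])+
          using Tc Mc n_def by (auto simp: algebra_simps)
        also have "\<dots> = of_nat dA * ST - SM"
          unfolding ST_def SM_def by (simp add: sum_subtractf sum_distrib_left)
        finally show ?thesis by simp
      qed
      finally show "0 \<le> (\<Sum>i<r * (dA * dB). \<Sum>j<r * (dA * dB). cnj (f i) * (of_nat dA \<cdot>\<^sub>m T - M)$$(i,j) * f j)"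
        unfolding n_def .
    qed
  qed
qed
lemma D_max_le:
  fixes c0 :: real
  assumes le: "loewner_le n M (complex_of_real c0 \<cdot>\<^sub>m T)" and c0: "c0 > 0" and tr: "mtrace M = 1"
  shows "D_max n M T \<le> ereal (log 2 c0)"
proof -
  define S where "S = {c::real. loewner_le n M (complex_of_real c \<cdot>\<^sub>m T)}"
  have c0S: "c0 \<in> S" using le S_def by simp
  have Tc: "T \<in> carrier_mat n n" and Mc: "M \<in> carrier_mat n n"
    using le unfolding loewner_le_def carrier_mat_def by auto
  define t where "t = Re (mtrace T)"
  have low: "1 \<le> c * t" if "c \<in> S" for c
  proof -
    have "psd n (complex_of_real c \<cdot>\<^sub>m T - M)" using that unfolding S_def loewner_le_def by blast
    then have "0 \<le> mtrace (complex_of_real c \<cdot>\<^sub>m T - M)" by (rule psd_trace)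
    also have "mtrace (complex_of_real c \<cdot>\<^sub>m T - M) = complex_of_real c * mtrace T - mtrace M"
      unfolding mtrace_def using Tc Mc by (simp add: sum_subtractf sum_distrib_left)
    finally show ?thesis using tr unfolding t_def by (simp add: less_eq_complex_def)
  qed
  have tpos: "t > 0"
  proof (rule ccontr)
    assume "\<not> t > 0"
    then have "c0 * t \<le> 0" using c0 by (simp add: mult_nonneg_nonpos)
    then show False using low[OF c0S] by linarith
  qed
  have lowb: "1 / t \<le> c" if "c \<in> S" for c
    using low[OF that] tpos by (simp add: divide_le_eq)
  have bdd: "bdd_below S" by (rule bdd_belowI[of _ "1/t"]) (rule lowb)
  have i1: "Inf S \<le> c0" by (rule cInf_lower[OF c0S bdd])
  have i2: "1 / t \<le> Inf S" using c0S by (intro cInf_greatest lowb) auto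
  have ipos: "0 < Inf S" using i2 tpos by (smt (verit) divide_pos_pos)
  have "D_max n M T = ereal (log 2 (Inf S))"
    unfolding D_max_def S_def[symmetric] using c0S by auto
  also have "\<dots> \<le> ereal (log 2 c0)" using i1 ipos c0 by simp
  finally show ?thesis .
qed

theorem proposition12:
  fixes dA1 dB1 dA dB :: nat and \<N> :: "complex mat \<Rightarrow> complex mat"
  assumes "dA1 > 0" "dB1 > 0" "dA > 0" "dB > 0"
    and "channel (dA1 * dB1) (dA * dB) \<N>"
    and "no_signaling dA1 dB1 dA dB \<N>"
  shows "S_min_ch dA1 dB1 dA dB \<N> \<ge> - ereal (log 2 (real dA))"
proof -
  from assms(6) obtain Q where Qch: "channel dB1 dB Q"
    and ns: "\<And>X. X \<in> carrier_mat (dA1*dB1) (dA1*dB1) \<Longrightarrow> ptrace_first dA dB (\<N> X) = Q (ptrace_first dA1 dB1 X)"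
    unfolding no_signaling_def by blast
  have Nlin: "lin_map (dA1*dB1) (dA*dB) \<N>"
    and NCP: "\<And>r \<rho>. r > 0 \<Longrightarrow> psd (r*(dA1*dB1)) \<rho> \<Longrightarrow> psd (r*(dA*dB)) (id_tensor r (dA1*dB1) (dA*dB) \<N> \<rho>)"
    and Ntp: "\<And>X. X \<in> carrier_mat (dA1*dB1) (dA1*dB1) \<Longrightarrow> mtrace (\<N> X) = mtrace X"
    using assms(5) unfolding channel_def CP_map_def by auto
  have Ncar: "\<And>X. X \<in> carrier_mat (dA1*dB1) (dA1*dB1) \<Longrightarrow> \<N> X \<in> carrier_mat (dA*dB) (dA*dB)"
    using Nlin unfolding lin_map_def by auto
  have Qlin: "lin_map dB1 dB Q" using Qch unfolding channel_def CP_map_def by auto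
  have D: "D_max_ch (dA1*dB1) (dA*dB) \<N> (tensor_map dA1 dB1 dA dB (repl_id dA) Q) \<le> ereal (log 2 (real dA))"
    unfolding D_max_ch_def
  proof (rule SUP_least, clarify)
    fix r \<rho> assume r: "0 < r" and dens: "density (r*(dA1*dB1)) \<rho>"
    have psdr: "psd (r*(dA1*dB1)) \<rho>" and tr1: "mtrace \<rho> = 1" using dens unfolding density_def by auto
    have rc: "\<rho> \<in> carrier_mat (r*(dA1*dB1)) (r*(dA1*dB1))" using psdr unfolding psd_def by auto
    define M where "M = id_tensor r (dA1*dB1) (dA*dB) \<N> \<rho>"
    define T where "T = id_tensor r (dA1*dB1) (dA*dB) (tensor_map dA1 dB1 dA dB (repl_id dA) Q) \<rho>"
    have psdM: "psd (r*(dA*dB)) M" unfolding M_def by (rule NCP[OF r psdr])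
    have trM: "mtrace M = 1" unfolding M_def using trace_id_tensor[OF Nlin Ntp rc] tr1 by simp
    have Tc: "T \<in> carrier_mat (r*(dA*dB)) (r*(dA*dB))" unfolding T_def id_tensor_def by simp
    have Bc: "block (dA1*dB1) \<rho> x x' \<in> carrier_mat (dA1*dB1) (dA1*dB1)" for x x'
      unfolding block_def by simp
    have Ment: "M $$ (x*(dA*dB)+c*dB+b, x'*(dA*dB)+c*dB+b') = \<N> (block (dA1*dB1) \<rho> x x') $$ (c*dB+b, c*dB+b')"
      if "c < dA" "x < r" "x' < r" "b < dB" "b' < dB" for c x x' b b'
      unfolding M_def id_tensor_def using that
      by (simp add: idx_lt idx_div idx_mod)
    have Tent: "T $$ (x*(dA*dB)+a*dB+b, x'*(dA*dB)+a'*dB+b') =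
      (if a' = a then (\<Sum>c<dA. M $$ (x*(dA*dB)+c*dB+b, x'*(dA*dB)+c*dB+b')) else 0)"
      if "a<dA" "a'<dA" "x<r" "x'<r" "b<dB" "b'<dB" for a a' x x' b b'
    proof -
      have "T $$ (x*(dA*dB)+a*dB+b, x'*(dA*dB)+a'*dB+b') =
         tensor_map dA1 dB1 dA dB (repl_id dA) Q (block (dA1*dB1) \<rho> x x') $$ (a*dB+b, a'*dB+b')"
        unfolding T_def id_tensor_def using that by (simp add: idx_lt idx_div idx_mod)
      also have "\<dots> = (if a = a' then Q (ptrace_first dA1 dB1 (block (dA1*dB1) \<rho> x x')) $$ (b, b') else 0)"
        using tensor_entry[OF Qlin Bc ab_lt[OF that(1) that(5)] ab_lt[OF that(2) that(6)]] that by simp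
      also have "\<dots> = (if a = a' then ptrace_first dA dB (\<N> (block (dA1*dB1) \<rho> x x')) $$ (b, b') else 0)"
        using ns[OF Bc] by simp
      also have "\<dots> = (if a' = a then (\<Sum>c<dA. \<N> (block (dA1*dB1) \<rho> x x') $$ (c*dB+b, c*dB+b')) else 0)"
        unfolding ptrace_first_def using that by auto
      also have "\<dots> = (if a' = a then (\<Sum>c<dA. M $$ (x*(dA*dB)+c*dB+b, x'*(dA*dB)+c*dB+b')) else 0)"
        using Ment that by simp
      finally show ?thesis .
    qed
    have "loewner_le (r*(dA*dB)) M (of_nat dA \<cdot>\<^sub>m T)"
      by (rule key[OF psdM Tc Tent]) auto
    then have "loewner_le (r*(dA*dB)) M (complex_of_real (real dA) \<cdot>\<^sub>m T)" by simp
    from D_max_le[OF this _ trM] assms(3)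
    show "D_max (r*(dA*dB)) (id_tensor r (dA1*dB1) (dA*dB) \<N> \<rho>)
        (id_tensor r (dA1*dB1) (dA*dB) (tensor_map dA1 dB1 dA dB (repl_id dA) Q) \<rho>) \<le> ereal (log 2 (real dA))"
      unfolding M_def T_def by simp
  qed
  have "(INF \<Q> \<in> {\<Q>. channel dB1 dB \<Q>}. D_max_ch (dA1*dB1) (dA*dB) \<N> (tensor_map dA1 dB1 dA dB (repl_id dA) \<Q>))
      \<le> ereal (log 2 (real dA))"
    by (rule INF_lower2[of Q]) (use Qch D in auto)
  then show ?thesis unfolding S_min_ch_def by (rule ereal_minus_le_minus[THEN iffD2])
qed
end
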